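(* The following are equivalent: (1) $C(X)_\mathcal{P}$ is clean; (2) $C(X)_\mathcal{P}$ is weakly clean; (3) $C(X)_\mathcal{P}$ is semiclean.
   Context: Let $(X,\tau)$ be a $T_1$ topological space and $\mathcal{P}$ an ideal of closed subsets of $X$ (a nonempty family of closed sets closed under finite unions and under taking closed subsets). For $f\colon X\to\mathbb{R}$, $D_f$ denotes the set of points of discontinuity of $f$, and $C(X)_\mathcal{P}=\{f\colon X\to\mathbb{R} : \overline{D_f}\in\mathcal{P}\}$, a commutative ring with unity under pointwise operations. A ring $R$ is clean if every element is $u+e$ with $u$ a unit and $e$ idempotent; weakly clean if every element is $u+e$ or $u-e$ with $u$ a unit and $e$ idempotent; semiclean if every element is $u+a$ with $u$ a unit and $a$ periodic, i.e. $a^k=a^l$ for some positive integers $k\neq l$. *)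

theory Defs
  imports "HOL-Analysis.Analysis"
begin

definition disc_points :: "'a topology \<Rightarrow> ('a \<Rightarrow> real) \<Rightarrow> 'a set" where
  "disc_points X f = {x \<in> topspace X. \<not> (\<forall>e>0. \<exists>U. openin X U \<and> x \<in> U \<and>
       (\<forall>y\<in>U. \<bar>f y - f x\<bar> < e))}"

definition closed_ideal :: "'a topology \<Rightarrow> 'a set set \<Rightarrow> bool" where
  "closed_ideal X P \<longleftrightarrow> P \<noteq> {} \<and> (\<forall>A\<in>P. closedin X A) \<and>
     (\<forall>A\<in>P. \<forall>B\<in>P. A \<union> B \<in> P) \<and> (\<forall>A\<in>P. \<forall>B. closedin X B \<and> B \<subseteq> A \<longrightarrow> B \<in> P)"

text \<open>The ring C(X)_P, as a set of real functions; two functions are the same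
  ring element iff they agree on topspace X.\<close>
definition CP :: "'a topology \<Rightarrow> 'a set set \<Rightarrow> ('a \<Rightarrow> real) set" where
  "CP X P = {f. X closure_of (disc_points X f) \<in> P}"

definition fr_unit :: "'a set \<Rightarrow> ('a \<Rightarrow> real) set \<Rightarrow> ('a \<Rightarrow> real) \<Rightarrow> bool" where
  "fr_unit S R u \<longleftrightarrow> u \<in> R \<and> (\<exists>v\<in>R. \<forall>x\<in>S. u x * v x = 1)"

definition fr_idem :: "'a set \<Rightarrow> ('a \<Rightarrow> real) set \<Rightarrow> ('a \<Rightarrow> real) \<Rightarrow> bool" where
  "fr_idem S R e \<longleftrightarrow> e \<in> R \<and> (\<forall>x\<in>S. e x * e x = e x)"

definition fr_periodic :: "'a set \<Rightarrow> ('a \<Rightarrow> real) set \<Rightarrow> ('a \<Rightarrow> real) \<Rightarrow> bool" where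
  "fr_periodic S R a \<longleftrightarrow> a \<in> R \<and>
     (\<exists>k l::nat. 0 < k \<and> 0 < l \<and> k \<noteq> l \<and> (\<forall>x\<in>S. a x ^ k = a x ^ l))"

definition fr_clean :: "'a set \<Rightarrow> ('a \<Rightarrow> real) set \<Rightarrow> bool" where
  "fr_clean S R \<longleftrightarrow> (\<forall>f\<in>R. \<exists>u e. fr_unit S R u \<and> fr_idem S R e \<and>
       (\<forall>x\<in>S. f x = u x + e x))"

definition fr_weakly_clean :: "'a set \<Rightarrow> ('a \<Rightarrow> real) set \<Rightarrow> bool" where
  "fr_weakly_clean S R \<longleftrightarrow> (\<forall>f\<in>R. \<exists>u e. fr_unit S R u \<and> fr_idem S R e \<and>
       ((\<forall>x\<in>S. f x = u x + e x) \<or> (\<forall>x\<in>S. f x = u x - e x)))"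

definition fr_semiclean :: "'a set \<Rightarrow> ('a \<Rightarrow> real) set \<Rightarrow> bool" where
  "fr_semiclean S R \<longleftrightarrow> (\<forall>f\<in>R. \<exists>u a. fr_unit S R u \<and> fr_periodic S R a \<and>
       (\<forall>x\<in>S. f x = u x + a x))"

end

theory Submission
  imports Defs
begin

lemma disc_iff:
  "x \<in> disc_points X f \<longleftrightarrow> x \<in> topspace X \<and> \<not> (f \<longlongrightarrow> f x) (atin X x)"
proof -
  have "(\<forall>e>0. \<exists>U. openin X U \<and> x \<in> U \<and> (\<forall>y\<in>U. \<bar>f y - f x\<bar> < e))
        \<longleftrightarrow> (f \<longlongrightarrow> f x) (atin X x)" if "x \<in> topspace X"
  proof
    assume H: "\<forall>e>0. \<exists>U. openin X U \<and> x \<in> U \<and> (\<forall>y\<in>U. \<bar>f y - f x\<bar> < e)"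
    show "(f \<longlongrightarrow> f x) (atin X x)"
      unfolding tendsto_iff eventually_atin dist_real_def
    proof (intro allI impI)
      fix e :: real assume "e > 0"
      then obtain U where "openin X U" "x \<in> U" "\<forall>y\<in>U. \<bar>f y - f x\<bar> < e" using H by blast
      then show "x \<notin> topspace X \<or> (\<exists>U. openin X U \<and> x \<in> U \<and> (\<forall>y\<in>U - {x}. \<bar>f y - f x\<bar> < e))"
        by blast
    qed
  next
    assume L: "(f \<longlongrightarrow> f x) (atin X x)"
    show "\<forall>e>0. \<exists>U. openin X U \<and> x \<in> U \<and> (\<forall>y\<in>U. \<bar>f y - f x\<bar> < e)"
    proof (intro allI impI)
      fix e :: real assume "e > 0"
      with L have "eventually (\<lambda>y. dist (f y) (f x) < e) (atin X x)"
        by (simp add: tendsto_iff)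
      with that obtain U where oU: "openin X U" and xU: "x \<in> U" and "\<forall>y\<in>U - {x}. \<bar>f y - f x\<bar> < e"
        by (auto simp: eventually_atin dist_real_def)
      then show "\<exists>U. openin X U \<and> x \<in> U \<and> (\<forall>y\<in>U. \<bar>f y - f x\<bar> < e)"
      proof (intro exI conjI ballI)
        fix y assume "y \<in> U"
        then show "\<bar>f y - f x\<bar> < e"
          using \<open>\<forall>y\<in>U - {x}. \<bar>f y - f x\<bar> < e\<close> \<open>e > 0\<close> by (cases "y = x") auto
      qed (rule oU, rule xU)
    qed
  qed
  then show ?thesis unfolding disc_points_def mem_Collect_eq by (meson)
qed

lemma CP_bin:
  assumes P: "closed_ideal X P" and f: "f \<in> CP X P" and g: "g \<in> CP X P"
    and H: "\<And>x. x \<in> topspace X \<Longrightarrow> (f \<longlongrightarrow> f x) (atin X x) \<Longrightarrow> (g \<longlongrightarrow> g x) (atin X x)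
              \<Longrightarrow> (h \<longlongrightarrow> h x) (atin X x)"
  shows "h \<in> CP X P"
proof -
  have "disc_points X h \<subseteq> disc_points X f \<union> disc_points X g"
    using H by (auto simp: disc_iff)
  then have s: "X closure_of disc_points X h \<subseteq> X closure_of disc_points X f \<union> X closure_of disc_points X g"
    by (metis closure_of_Un closure_of_mono)
  have un: "\<forall>A\<in>P. \<forall>B\<in>P. A \<union> B \<in> P" and sub: "\<forall>A\<in>P. \<forall>B. closedin X B \<and> B \<subseteq> A \<longrightarrow> B \<in> P"
    using P unfolding closed_ideal_def by blast+
  have "X closure_of disc_points X f \<in> P" "X closure_of disc_points X g \<in> P"
    using f g unfolding CP_def by blast+
  then have A: "X closure_of disc_points X f \<union> X closure_of disc_points X g \<in> P"
    using un by blast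
  have "X closure_of disc_points X h \<in> P"
    using sub[rule_format, OF A] s closedin_closure_of by blast
  then show ?thesis unfolding CP_def by simp
qed

lemma CP_un:
  assumes P: "closed_ideal X P" and f: "f \<in> CP X P"
    and H: "\<And>x. x \<in> topspace X \<Longrightarrow> (f \<longlongrightarrow> f x) (atin X x) \<Longrightarrow> (h \<longlongrightarrow> h x) (atin X x)"
  shows "h \<in> CP X P"
  using CP_bin[OF P f f] H by blast

lemma periodic_bound:
  fixes a :: real
  assumes "0 < k" "k \<noteq> l" "a ^ k = a ^ l"
  shows "\<bar>a\<bar> \<le> 1"
proof (rule ccontr)
  assume "\<not> \<bar>a\<bar> \<le> 1"
  then have g: "1 < \<bar>a\<bar>" by simp
  have e: "\<bar>a\<bar> ^ k = \<bar>a\<bar> ^ l" using assms(3) by (metis power_abs)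
  show False
  proof (cases "k < l")
    case True then have "\<bar>a\<bar> ^ k < \<bar>a\<bar> ^ l" by (rule power_strict_increasing[OF _ g])
    then show ?thesis using e by simp
  next
    case False then have "l < k" using assms(2) by simp
    then have "\<bar>a\<bar> ^ l < \<bar>a\<bar> ^ k" by (rule power_strict_increasing[OF _ g])
    then show ?thesis using e by simp
  qed
qed

theorem theorem3p10:
  fixes X :: "'a topology" and P :: "'a set set"
  assumes "t1_space X" and "closed_ideal X P"
  shows "(fr_clean (topspace X) (CP X P) \<longleftrightarrow> fr_weakly_clean (topspace X) (CP X P)) \<and>
         (fr_weakly_clean (topspace X) (CP X P) \<longleftrightarrow> fr_semiclean (topspace X) (CP X P))"
proof -
  note P = assms(2)
  let ?S = "topspace X" and ?R = "CP X P"
  have cw: "fr_clean ?S ?R \<Longrightarrow> fr_weakly_clean ?S ?R"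
    unfolding fr_clean_def fr_weakly_clean_def by blast
  have ws: "fr_semiclean ?S ?R" if W: "fr_weakly_clean ?S ?R"
    unfolding fr_semiclean_def
  proof
    fix f assume "f \<in> ?R"
    with W obtain u e where u: "fr_unit ?S ?R u" and e: "fr_idem ?S ?R e"
      and d: "(\<forall>x\<in>?S. f x = u x + e x) \<or> (\<forall>x\<in>?S. f x = u x - e x)"
      unfolding fr_weakly_clean_def by blast
    show "\<exists>u a. fr_unit ?S ?R u \<and> fr_periodic ?S ?R a \<and> (\<forall>x\<in>?S. f x = u x + a x)"
      using d
    proof
      assume pl: "\<forall>x\<in>?S. f x = u x + e x"
      have pe: "fr_periodic ?S ?R e"
      proof -
        have "e \<in> ?R" "\<forall>x\<in>?S. e x * e x = e x" using e unfolding fr_idem_def by blast+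
        then have "e \<in> ?R \<and> 0 < (1::nat) \<and> 0 < (2::nat) \<and> (1::nat) \<noteq> 2 \<and> (\<forall>x\<in>?S. e x ^ 1 = e x ^ 2)"
          by (simp add: power2_eq_square)
        then show ?thesis unfolding fr_periodic_def by blast
      qed
      show ?thesis using u pe pl by blast
    next
      assume m: "\<forall>x\<in>?S. f x = u x - e x"
      have mR: "(\<lambda>x. - e x) \<in> ?R"
      proof (rule CP_un[OF P])
        show "e \<in> ?R" using e unfolding fr_idem_def by blast
      next
        fix x assume "(e \<longlongrightarrow> e x) (atin X x)"
        then show "((\<lambda>x. - e x) \<longlongrightarrow> - e x) (atin X x)" by (rule tendsto_minus)
      qed
      have m24: "\<forall>x\<in>?S. (- e x) ^ 2 = (- e x) ^ 4"
      proof
        fix x assume "x \<in> ?S"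
        then have ee: "e x * e x = e x" using e unfolding fr_idem_def by blast
        have "(- e x) ^ 4 = (e x * e x) * (e x * e x)" by (simp add: power4_eq_xxxx)
        also have "\<dots> = e x" by (simp only: ee)
        finally have a4: "(- e x) ^ 4 = e x" .
        have a2: "(- e x) ^ 2 = e x" by (simp only: power2_eq_square minus_mult_minus ee)
        show "(- e x) ^ 2 = (- e x) ^ 4" by (simp only: a2 a4)
      qed
      have "(\<lambda>x. - e x) \<in> ?R \<and> 0 < (2::nat) \<and> 0 < (4::nat) \<and> (2::nat) \<noteq> 4 \<and>
             (\<forall>x\<in>?S. (- e x) ^ 2 = (- e x) ^ 4)" using mR m24 by simp
      then have pm: "fr_periodic ?S ?R (\<lambda>x. - e x)"
        unfolding fr_periodic_def by blast
      have "\<forall>x\<in>?S. f x = u x + (- e x)" using m by simp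
      then show ?thesis using u pm by blast
    qed
  qed
  have sc: "fr_clean ?S ?R" if Sc: "fr_semiclean ?S ?R"
    unfolding fr_clean_def
  proof
    fix f assume f: "f \<in> ?R"
    have g: "(\<lambda>x. 4 * f x - 2) \<in> ?R"
      by (intro CP_un[OF P f]) (auto intro!: tendsto_intros)
    obtain u a where u: "fr_unit ?S ?R u" and a: "fr_periodic ?S ?R a"
      and d: "\<forall>x\<in>?S. 4 * f x - 2 = u x + a x"
      using bspec[OF Sc[unfolded fr_semiclean_def] g] by auto
    obtain v where uR: "u \<in> ?R" and v: "\<forall>x\<in>?S. u x * v x = 1"
      using u unfolding fr_unit_def by blast
    have unz: "u x \<noteq> 0" if "x \<in> ?S" for x using v that by (metis mult_zero_left zero_neq_one)
    obtain k l :: nat where kl: "0 < k" "k \<noteq> l" "\<forall>x\<in>?S. a x ^ k = a x ^ l"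
      using a unfolding fr_periodic_def by blast
    have ab: "\<bar>a x\<bar> \<le> 1" if "x \<in> ?S" for x using periodic_bound[OF kl(1,2)] kl(3) that by blast
    define e where "e = (\<lambda>x. if u x < 0 then 1 else (0::real))"
    have eR: "e \<in> ?R"
    proof (rule CP_un[OF P uR])
      fix x assume x: "x \<in> ?S" and L: "(u \<longlongrightarrow> u x) (atin X x)"
      show "(e \<longlongrightarrow> e x) (atin X x)"
      proof (cases "u x < 0")
        case True
        then have "eventually (\<lambda>y. u y < 0) (atin X x)" using L order_tendstoD(2) by blast
        then have "eventually (\<lambda>y. e y = e x) (atin X x)"
          by (rule eventually_mono) (use True in \<open>simp add: e_def\<close>)
        then show ?thesis by (rule tendsto_eventually)
      next
        case False
        then have "u x > 0" using unz[OF x] by simp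
        then have "eventually (\<lambda>y. u y > 0) (atin X x)" using L order_tendstoD(1) by blast
        then have "eventually (\<lambda>y. e y = e x) (atin X x)"
          by (rule eventually_mono) (use False in \<open>simp add: e_def\<close>)
        then show ?thesis by (rule tendsto_eventually)
      qed
    qed
    have nz: "f x - e x \<noteq> 0" if x: "x \<in> ?S" for x
    proof (cases "u x < 0")
      case True
      then show ?thesis using d[rule_format, OF x] ab[OF x] by (simp add: e_def abs_le_iff)
    next
      case False
      then have "u x > 0" using unz[OF x] by linarith
      then show ?thesis using d[rule_format, OF x] ab[OF x] by (simp add: e_def abs_le_iff)
    qed
    have UR: "(\<lambda>x. f x - e x) \<in> ?R"
      by (intro CP_bin[OF P f eR]) (auto intro!: tendsto_intros)
    have VR: "(\<lambda>x. inverse (f x - e x)) \<in> ?R"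
    proof (rule CP_un[OF P UR])
      fix x assume x: "x \<in> ?S" and L: "((\<lambda>x. f x - e x) \<longlongrightarrow> f x - e x) (atin X x)"
      show "((\<lambda>x. inverse (f x - e x)) \<longlongrightarrow> inverse (f x - e x)) (atin X x)"
        by (rule tendsto_inverse[OF L nz[OF x]])
    qed
    have "fr_unit ?S ?R (\<lambda>x. f x - e x)"
      unfolding fr_unit_def
    proof (intro conjI bexI[of _ "\<lambda>x. inverse (f x - e x)"] ballI)
      fix x assume "x \<in> ?S"
      then show "(f x - e x) * inverse (f x - e x) = 1" using nz by simp
    qed (rule UR, rule VR)
    moreover have "fr_idem ?S ?R e" unfolding fr_idem_def using eR by (auto simp: e_def)
    moreover have "\<forall>x\<in>?S. f x = (f x - e x) + e x" by simp
    ultimately show "\<exists>u e. fr_unit ?S ?R u \<and> fr_idem ?S ?R e \<and> (\<forall>x\<in>?S. f x = u x + e x)"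
      by (intro exI[of _ "\<lambda>x. f x - e x"] exI[of _ e] conjI) (assumption, assumption, simp)
  qed
  have wc: "fr_weakly_clean ?S ?R \<Longrightarrow> fr_clean ?S ?R" by (rule sc[OF ws])
  have sw: "fr_semiclean ?S ?R \<Longrightarrow> fr_weakly_clean ?S ?R" by (rule cw[OF sc])
  show ?thesis
  proof (intro conjI iffI)
    assume "fr_clean ?S ?R" then show "fr_weakly_clean ?S ?R" by (rule cw)
  next
    assume "fr_weakly_clean ?S ?R" then show "fr_clean ?S ?R" by (rule wc)
  next
    assume "fr_weakly_clean ?S ?R" then show "fr_semiclean ?S ?R" by (rule ws)
  next
    assume "fr_semiclean ?S ?R" then show "fr_weakly_clean ?S ?R" by (rule sw)
  qed
qed

end
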